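(* Let $G=(\mu,\mathcal{V},\mathcal{W},\mathcal{E})$ be a weighted bipartite graph with edge density $\delta>0$. If $G$ is $\theta$-maximal for some $\theta>1$, then $G$ is $(\frac{\theta-1}{\theta}\cdot\delta)$-connected.
   Context: A weighted bipartite graph is $G=(\mu,\mathcal{V},\mathcal{W},\mathcal{E})$ with $\mu:\mathbb{R}_{>0}\to\mathbb{R}_{>0}$, $\mathcal{V},\mathcal{W}$ finite sets of positive reals, $\mathcal{E}\subseteq\mathcal{V}\times\mathcal{W}$. $\mu(\mathcal{T})=\sum_{t\in\mathcal{T}}\mu(t)$ and $\mu(\mathcal{E})=\sum_{(v,w)\in\mathcal{E}}\mu(v)\mu(w)$. Edge density $\delta(G)=\mu(\mathcal{E})/(\mu(\mathcal{V})\mu(\mathcal{W}))$ if $\mathcal{E}\ne\emptyset$, else $0$. For $\theta\ge1$, $\mu^{(\theta)}(G)=\delta(G)^\theta\mu(\mathcal{V})\mu(\mathcal{W})$. A subgraph of $G$ is $(\mu,\mathcal{V}',\mathcal{W}',\mathcal{E}')$ with $\mathcal{V}'\subseteq\mathcal{V}$, $\mathcal{W}'\subseteq\mathcal{W}$, $\mathcal{E}'\subseteq\mathcal{E}\cap(\mathcal{V}'\times\mathcal{W}')$. $G$ is $\theta$-maximal if $\mu^{(\theta)}(G)\ge\mu^{(\theta)}(G')$ for every subgraph $G'$. Neighbourhoods: $\Gamma_G(v)=\{w\in\mathcal{W}:(v,w)\in\mathcal{E}\}$ for $v\in\mathcal{V}$ and $\Gamma_G(w)=\{v\in\mathcal{V}:(v,w)\in\mathcal{E}\}$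 for $w\in\mathcal{W}$. $G$ is $\eta$-connected if $\mu(\Gamma_G(v))\ge\eta\,\mu(\mathcal{W})$ for all $v\in\mathcal{V}$ and $\mu(\Gamma_G(w))\ge\eta\,\mu(\mathcal{V})$ for all $w\in\mathcal{W}$. *)

theory Defs
  imports Complex_Main
begin

type_synonym wbgraph = "(real \<Rightarrow> real) \<times> real set \<times> real set \<times> (real \<times> real) set"

definition wbg :: "wbgraph \<Rightarrow> bool" where
  "wbg G = (case G of (\<mu>, V, W, E) \<Rightarrow>
      (\<forall>x>0. \<mu> x > 0) \<and> finite V \<and> finite W \<and>
      (\<forall>v\<in>V. v > 0) \<and> (\<forall>w\<in>W. w > 0) \<and> E \<subseteq> V \<times> W)"

definition mu_set :: "(real \<Rightarrow> real) \<Rightarrow> real set \<Rightarrow> real" where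
  "mu_set \<mu> T = (\<Sum>t\<in>T. \<mu> t)"

definition mu_edges :: "(real \<Rightarrow> real) \<Rightarrow> (real \<times> real) set \<Rightarrow> real" where
  "mu_edges \<mu> E = (\<Sum>(v,w)\<in>E. \<mu> v * \<mu> w)"

definition density :: "wbgraph \<Rightarrow> real" where
  "density G = (case G of (\<mu>, V, W, E) \<Rightarrow>
      (if E = {} then 0 else mu_edges \<mu> E / (mu_set \<mu> V * mu_set \<mu> W)))"

definition mu_theta :: "real \<Rightarrow> wbgraph \<Rightarrow> real" where
  "mu_theta \<theta> G = (case G of (\<mu>, V, W, E) \<Rightarrow>
      density G powr \<theta> * mu_set \<mu> V * mu_set \<mu> W)"

definition subgraph :: "wbgraph \<Rightarrow> wbgraph \<Rightarrow> bool" where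
  "subgraph G' G = (case G of (\<mu>, V, W, E) \<Rightarrow> case G' of (\<mu>', V', W', E') \<Rightarrow>
      \<mu>' = \<mu> \<and> V' \<subseteq> V \<and> W' \<subseteq> W \<and> E' \<subseteq> E \<inter> (V' \<times> W'))"

definition theta_maximal :: "real \<Rightarrow> wbgraph \<Rightarrow> bool" where
  "theta_maximal \<theta> G = (\<forall>G'. subgraph G' G \<longrightarrow> mu_theta \<theta> G' \<le> mu_theta \<theta> G)"

definition eta_connected :: "real \<Rightarrow> wbgraph \<Rightarrow> bool" where
  "eta_connected \<eta> G = (case G of (\<mu>, V, W, E) \<Rightarrow>
      (\<forall>v\<in>V. mu_set \<mu> {w\<in>W. (v,w) \<in> E} \<ge> \<eta> * mu_set \<mu> W) \<and>
      (\<forall>w\<in>W. mu_set \<mu> {v\<in>V. (v,w) \<in> E} \<ge> \<eta> * mu_set \<mu> V))"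

end

theory Submission imports Defs "HOL-Analysis.Convex" begin

lemma key:
  fixes \<theta> a A B M d :: real
  assumes th: "\<theta> > 1" and a: "0 < a" "a \<le> A" and B: "B > 0" and M: "M > 0"
    and d: "0 \<le> d" and ad: "a * d \<le> M" and adA: "M - a * d \<le> (A - a) * B"
    and H: "((M - a*d)/((A-a)*B)) powr \<theta> * (A-a) * B \<le> (M/(A*B)) powr \<theta> * A * B"
  shows "(\<theta> - 1)/\<theta> * (M/(A*B)) * B \<le> d"
proof (rule ccontr)
  define c where "c = (\<theta> - 1)/\<theta>"
  have c01: "0 < c" "c < 1" using th by (auto simp: c_def field_simps)
  assume "\<not> ?thesis"
  moreover have "(\<theta> - 1)/\<theta> * (M/(A*B)) * B = c * M / A" using B by (simp add: c_def)
  ultimately have dl: "d < c * M / A" by simp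
  have A0: "A > 0" using a by simp
  have "M / A \<le> d" if "M = a * d"
  proof -
    have "M / A \<le> M / a" using a M by (simp add: frac_le)
    also have "\<dots> = d" using that a by simp
    finally show ?thesis .
  qed
  moreover have "c * M / A \<le> M / A" using c01 M A0 by (simp add: divide_right_mono)
  ultimately have ne: "M \<noteq> a * d" using dl by linarith
  have aA: "a < A"
  proof (rule ccontr)
    assume "\<not> a < A" hence "A = a" using a by simp
    with adA ad have "M = a * d" by simp
    with ne show False by simp
  qed
  define u where "u = (M - a*d)/M"
  define v where "v = (A - a)/A"
  have u0: "u > 0" using ne ad M by (simp add: u_def)
  have v0: "v > 0" "v < 1" using aA a by (auto simp: v_def)
  define K where "K = (M/(A*B)) powr \<theta>"
  have K0: "K > 0" using M A0 B by (simp add: K_def)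
  have eq1: "(M - a*d)/((A-a)*B) = u / v * (M/(A*B))" using M A0 B aA
    by (simp add: u_def v_def field_simps)
  have "((M - a*d)/((A-a)*B)) powr \<theta> = u powr \<theta> / v powr \<theta> * K"
    unfolding eq1 K_def using u0 v0 M A0 B by (simp add: powr_mult powr_divide)
  with H have "u powr \<theta> / v powr \<theta> * K * (v * A) * B \<le> K * A * B"
    by (simp add: K_def v_def A0)
  hence "(u powr \<theta> / v powr \<theta> * v) * (K * A * B) \<le> 1 * (K * A * B)"
    by (simp add: algebra_simps)
  hence "u powr \<theta> / v powr \<theta> * v \<le> 1" using K0 A0 B
    by (metis mult_le_cancel_right_pos mult_pos_pos)
  hence "u powr \<theta> * v \<le> v powr \<theta>" using v0 by (simp add: field_simps)
  also have "v powr \<theta> = (v powr c) powr \<theta> * v"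
  proof -
    have "c * \<theta> + 1 = \<theta>" using th by (simp add: c_def field_simps)
    hence "v powr \<theta> = v powr (c * \<theta>) * v powr 1" by (metis powr_add)
    thus ?thesis using v0 by (simp add: powr_powr)
  qed
  finally have ule: "u powr \<theta> \<le> (v powr c) powr \<theta>" using v0 by simp
  have "v powr c = 1 powr (1/\<theta>) * v powr c" by simp
  also have "\<dots> \<le> 1/\<theta> * 1 + c * v"
    by (rule Youngs_inequality_0) (use th v0 c01 in \<open>auto simp: c_def field_simps\<close>)
  also have "\<dots> < u"
  proof -
    have "a * d < c * a * M / A" using dl a by (simp add: field_simps)
    thus ?thesis using M A0 th unfolding u_def v_def c_def by (simp add: field_simps)
  qed
  finally have "(v powr c) powr \<theta> < u powr \<theta>"
    using v0 th by (intro powr_less_mono2) auto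
  with ule show False by simp
qed
lemma density_eq: "density (\<mu>,V,W,E) = mu_edges \<mu> E / (mu_set \<mu> V * mu_set \<mu> W)"
  by (simp add: density_def mu_edges_def)

lemma mu_theta_eq: "mu_theta \<theta> (\<mu>,V,W,E) = density (\<mu>,V,W,E) powr \<theta> * mu_set \<mu> V * mu_set \<mu> W"
  by (simp add: mu_theta_def)

lemma mu_edges_prod: "finite V \<Longrightarrow> finite W \<Longrightarrow> mu_edges \<mu> (V \<times> W) = mu_set \<mu> V * mu_set \<mu> W"
  by (simp add: mu_edges_def mu_set_def sum.cartesian_product[symmetric] sum_product)

lemma sideV:
  assumes g: "wbg (\<mu>,V,W,E)" and dp: "density (\<mu>,V,W,E) > 0" and th: "\<theta> > 1"
    and mx: "theta_maximal \<theta> (\<mu>,V,W,E)" and v: "v \<in> V"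
  shows "(\<theta> - 1)/\<theta> * density (\<mu>,V,W,E) * mu_set \<mu> W \<le> mu_set \<mu> {w\<in>W. (v,w) \<in> E}"
proof -
  from g have mupos: "\<And>x. x > 0 \<Longrightarrow> \<mu> x > 0" and fV: "finite V" and fW: "finite W"
    and Vp: "\<forall>v\<in>V. v > 0" and Wp: "\<forall>w\<in>W. w > 0" and EVW: "E \<subseteq> V \<times> W"
    by (auto simp: wbg_def)
  have fE: "finite E" using EVW fV fW finite_subset by blast
  define \<Gamma> where "\<Gamma> = {w\<in>W. (v,w) \<in> E}"
  define E' where "E' = E \<inter> ((V - {v}) \<times> W)"
  define A where "A = mu_set \<mu> V"
  define B where "B = mu_set \<mu> W"
  define M where "M = mu_edges \<mu> E"
  define a where "a = \<mu> v"
  define d where "d = mu_set \<mu> \<Gamma>"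
  have nnV: "\<And>x. x \<in> V \<Longrightarrow> \<mu> x > 0" using Vp mupos by auto
  have nnW: "\<And>x. x \<in> W \<Longrightarrow> \<mu> x > 0" using Wp mupos by auto
  have a0: "a > 0" using nnV v a_def by simp
  have aA: "a \<le> A" unfolding a_def A_def mu_set_def
    using fV v nnV by (intro member_le_sum) (auto intro: less_imp_le)
  have d0: "d \<ge> 0" unfolding d_def mu_set_def \<Gamma>_def using nnW by (intro sum_nonneg) (auto intro: less_imp_le)
  have Esplit: "E = E' \<union> ({v} \<times> \<Gamma>)" using EVW by (auto simp: E'_def \<Gamma>_def)
  have disj: "E' \<inter> ({v} \<times> \<Gamma>) = {}" by (auto simp: E'_def)
  have fE': "finite E'" using fE by (simp add: E'_def)
  have fG: "finite \<Gamma>" using fW by (simp add: \<Gamma>_def)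
  have Msplit: "M = mu_edges \<mu> E' + a * d"
  proof -
    have "M = mu_edges \<mu> E' + mu_edges \<mu> ({v} \<times> \<Gamma>)"
      unfolding M_def mu_edges_def by (subst Esplit, rule sum.union_disjoint) (use fE' fG disj in auto)
    moreover have "mu_edges \<mu> ({v} \<times> \<Gamma>) = a * d"
      using mu_edges_prod[of "{v}" \<Gamma> \<mu>] fG by (simp add: mu_set_def a_def d_def)
    ultimately show ?thesis by simp
  qed
  have E'nn: "mu_edges \<mu> E' \<ge> 0" unfolding mu_edges_def E'_def
    using nnV nnW by (intro sum_nonneg) (auto intro!: mult_nonneg_nonneg less_imp_le)
  have E'le: "mu_edges \<mu> E' \<le> mu_edges \<mu> ((V - {v}) \<times> W)" unfolding mu_edges_def E'_def
    using nnV nnW fV fW by (intro sum_mono2) (auto intro!: mult_nonneg_nonneg less_imp_le)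
  have AV': "mu_set \<mu> (V - {v}) = A - a" unfolding A_def a_def mu_set_def
    using fV v by (simp add: sum_diff1)
  have E'le2: "M - a * d \<le> (A - a) * B"
    using E'le Msplit mu_edges_prod[of "V - {v}" W \<mu>] fV fW AV' B_def by simp
  have B0: "B \<ge> 0" unfolding B_def mu_set_def using nnW by (intro sum_nonneg) (auto intro: less_imp_le)
  have A0: "A > 0" using a0 aA by simp
  have dens: "density (\<mu>,V,W,E) = M / (A * B)" by (simp add: density_eq M_def A_def B_def)
  have Bp: "B > 0" using dp dens B0 A0 by (cases "B = 0") auto
  have Mp: "M > 0" using dp dens A0 Bp mult_pos_pos[OF A0 Bp] by (auto simp: zero_less_divide_iff)
  have sub: "subgraph (\<mu>, V - {v}, W, E') (\<mu>,V,W,E)" by (auto simp: subgraph_def E'_def)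
  have H: "mu_theta \<theta> (\<mu>, V - {v}, W, E') \<le> mu_theta \<theta> (\<mu>,V,W,E)"
    using mx sub by (simp add: theta_maximal_def)
  have H': "((M - a*d)/((A-a)*B)) powr \<theta> * (A-a) * B \<le> (M/(A*B)) powr \<theta> * A * B"
  proof -
    have e1: "mu_edges \<mu> E' = M - a*d" using Msplit by simp
    show ?thesis using H unfolding mu_theta_eq density_eq AV' e1
      by (simp add: M_def A_def B_def)
  qed
  have "(\<theta> - 1)/\<theta> * (M/(A*B)) * B \<le> d"
    by (rule key[OF th a0 aA Bp Mp d0 _ E'le2 H']) (use Msplit E'nn in simp)
  thus ?thesis using dens by (simp add: B_def d_def \<Gamma>_def)
qed
lemma sideW:
  assumes g: "wbg (\<mu>,V,W,E)" and dp: "density (\<mu>,V,W,E) > 0" and th: "\<theta> > 1"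
    and mx: "theta_maximal \<theta> (\<mu>,V,W,E)" and w: "w \<in> W"
  shows "(\<theta> - 1)/\<theta> * density (\<mu>,V,W,E) * mu_set \<mu> V \<le> mu_set \<mu> {v\<in>V. (v,w) \<in> E}"
proof -
  from g have mupos: "\<And>x. x > 0 \<Longrightarrow> \<mu> x > 0" and fV: "finite V" and fW: "finite W"
    and Vp: "\<forall>v\<in>V. v > 0" and Wp: "\<forall>w\<in>W. w > 0" and EVW: "E \<subseteq> V \<times> W"
    by (auto simp: wbg_def)
  have fE: "finite E" using EVW fV fW finite_subset by blast
  define \<Gamma> where "\<Gamma> = {v\<in>V. (v,w) \<in> E}"
  define E' where "E' = E \<inter> (V \<times> (W - {w}))"
  define A where "A = mu_set \<mu> V"
  define B where "B = mu_set \<mu> W"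
  define M where "M = mu_edges \<mu> E"
  define b where "b = \<mu> w"
  define d where "d = mu_set \<mu> \<Gamma>"
  have nnV: "\<And>x. x \<in> V \<Longrightarrow> \<mu> x > 0" using Vp mupos by auto
  have nnW: "\<And>x. x \<in> W \<Longrightarrow> \<mu> x > 0" using Wp mupos by auto
  have b0: "b > 0" using nnW w b_def by simp
  have bB: "b \<le> B" unfolding b_def B_def mu_set_def
    using fW w nnW by (intro member_le_sum) (auto intro: less_imp_le)
  have d0: "d \<ge> 0" unfolding d_def mu_set_def \<Gamma>_def using nnV by (intro sum_nonneg) (auto intro: less_imp_le)
  have Esplit: "E = E' \<union> (\<Gamma> \<times> {w})" using EVW by (auto simp: E'_def \<Gamma>_def)
  have disj: "E' \<inter> (\<Gamma> \<times> {w}) = {}" by (auto simp: E'_def)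
  have fE': "finite E'" using fE by (simp add: E'_def)
  have fG: "finite \<Gamma>" using fV by (simp add: \<Gamma>_def)
  have Msplit: "M = mu_edges \<mu> E' + b * d"
  proof -
    have "M = mu_edges \<mu> E' + mu_edges \<mu> (\<Gamma> \<times> {w})"
      unfolding M_def mu_edges_def by (subst Esplit, rule sum.union_disjoint) (use fE' fG disj in auto)
    moreover have "mu_edges \<mu> (\<Gamma> \<times> {w}) = b * d"
      using mu_edges_prod[of \<Gamma> "{w}" \<mu>] fG by (simp add: mu_set_def b_def d_def)
    ultimately show ?thesis by simp
  qed
  have E'nn: "mu_edges \<mu> E' \<ge> 0" unfolding mu_edges_def E'_def
    using nnV nnW by (intro sum_nonneg) (auto intro!: mult_nonneg_nonneg less_imp_le)
  have E'le: "mu_edges \<mu> E' \<le> mu_edges \<mu> (V \<times> (W - {w}))" unfolding mu_edges_def E'_def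
    using nnV nnW fV fW by (intro sum_mono2) (auto intro!: mult_nonneg_nonneg less_imp_le)
  have BW': "mu_set \<mu> (W - {w}) = B - b" unfolding B_def b_def mu_set_def
    using fW w by (simp add: sum_diff1)
  have E'le2: "M - b * d \<le> (B - b) * A"
    using E'le Msplit mu_edges_prod[of V "W - {w}" \<mu>] fV fW BW' A_def by (simp add: mult.commute)
  have A0: "A \<ge> 0" unfolding A_def mu_set_def using nnV by (intro sum_nonneg) (auto intro: less_imp_le)
  have B0: "B > 0" using b0 bB by simp
  have dens: "density (\<mu>,V,W,E) = M / (A * B)" by (simp add: density_eq M_def A_def B_def)
  have Ap: "A > 0" using dp dens B0 A0 by (cases "A = 0") auto
  have Mp: "M > 0" using dp dens Ap B0 mult_pos_pos[OF Ap B0] by (auto simp: zero_less_divide_iff)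
  have sub: "subgraph (\<mu>, V, W - {w}, E') (\<mu>,V,W,E)" by (auto simp: subgraph_def E'_def)
  have H: "mu_theta \<theta> (\<mu>, V, W - {w}, E') \<le> mu_theta \<theta> (\<mu>,V,W,E)"
    using mx sub by (simp add: theta_maximal_def)
  have H': "((M - b*d)/((B-b)*A)) powr \<theta> * (B-b) * A \<le> (M/(B*A)) powr \<theta> * B * A"
  proof -
    have e1: "mu_edges \<mu> E' = M - b*d" using Msplit by simp
    have "((M - b*d)/(A*(B-b))) powr \<theta> * A * (B-b) \<le> (M/(A*B)) powr \<theta> * A * B"
      using H unfolding mu_theta_eq density_eq BW' e1
      by (simp add: M_def A_def B_def)
    thus ?thesis by (simp add: mult.commute mult.left_commute)
  qed
  have "(\<theta> - 1)/\<theta> * (M/(B*A)) * A \<le> d"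
    by (rule key[OF th b0 bB Ap Mp d0 _ E'le2 H']) (use Msplit E'nn in simp)
  thus ?thesis using dens by (simp add: A_def d_def \<Gamma>_def mult.commute)
qed

theorem lemma5p9:
  fixes G :: wbgraph and \<theta> :: real
  assumes "wbg G"
    and "density G > 0"
    and "\<theta> > 1"
    and "theta_maximal \<theta> G"
  shows "eta_connected ((\<theta> - 1) / \<theta> * density G) G"
proof -
  obtain \<mu> V W E where G: "G = (\<mu>,V,W,E)" by (cases G) auto
  show ?thesis using assms sideV[of \<mu> V W E \<theta>] sideW[of \<mu> V W E \<theta>]
    unfolding G eta_connected_def by auto
qed
end
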